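(* Let $T=(V,E,\gamma,\mathrm{p})$ be a fault tree. Then the output of Algorithm $\mathtt{SFPA}$ (described in the context) on input $T$ equals the unreliability $U(T)$.
   Context: A fault tree (FT) is a tuple $T=(V,E,\gamma,\mathrm{p})$ where $(V,E)$ is a rooted directed acyclic graph (edges point from a node to its children; the root is denoted $R_T$), $\gamma\colon V\to\{\mathtt{OR},\mathtt{AND},\mathtt{BE}\}$ satisfies $\gamma(v)=\mathtt{BE}$ iff $v$ is a leaf, and $\mathrm{p}\colon \mathrm{BE}(T)\to[0,1]$ with $\mathrm{BE}(T)=\{v\in V\mid \gamma(v)=\mathtt{BE}\}$. Let $\mathrm{ch}(v)$ be the set of children of $v$. For $\vec f\in\{0,1\}^{\mathrm{BE}(T)}$ the structure function is defined recursively by $S_T(v,\vec f)=f_v$ if $\gamma(v)=\mathtt{BE}$, $S_T(v,\vec f)=\bigvee_{w\in\mathrm{ch}(v)}S_T(w,\vec f)$ if $\gamma(v)=\mathtt{OR}$, and $S_T(v,\vec f)=\bigwedge_{w\in\mathrm{ch}(v)}S_T(w,\vec f)$ if $\gamma(v)=\mathtt{AND}$. Let $\vec F$ be a random vector in $\{0,1\}^{\mathrm{BE}(T)}$ with independent coordinates and $\mathbb P(F_v=1)=\mathrm{p}(v)$. The unreliability is $U(T)=\mathbb P(S_T(R_T,\vec F)=1)$. Order and dominators: write $x\preceq y$ iff there is a directed path (possibly of length $0$) from $y$ to $x$, and $x\prec y$ iff $x\preceq y$ and $x\neq y$. A node $w$ dominates $v$ if $v\prec w$ and every directed path from $R_T$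 to $v$ contains $w$. For every $v\neq R_T$ there is a unique dominator $\mathrm{id}(v)$ of $v$ (the immediate dominator) such that $\mathrm{id}(v)\preceq w'$ for every dominator $w'$ of $v$. Squarefree polynomial algebra: for a finite set $X$, $\mathcal A(X)$ is the real algebra of formal sums $\alpha=\sum_{Y\subseteq X}\alpha_Y\prod_{x\in Y}\mathsf F_x$ ($\alpha_Y\in\mathbb R$, $\mathsf F_x$ formal variables), with addition and multiplication as for polynomials subject to $\mathsf F_x^2=\mathsf F_x$, i.e. $(\alpha+\beta)_Y=\alpha_Y+\beta_Y$ and $(\alpha\beta)_Y=\sum_{Y',Y''\subseteq X,\,Y'\cup Y''=Y}\alpha_{Y'}\beta_{Y''}$. If $X\subseteq X'$, elements of $\mathcal A(X)$ are regarded as elements of $\mathcal A(X')$ (coefficients $0$ outside $X$); $\mathcal A(\varnothing)=\mathbb R$. For finite sets $X,Y$, $x\in X\setminus Y$, $\alpha\in\mathcal A(X)$, $\beta\in\mathcal A(Y)$, the substitution $\alpha[\mathsf F_x\mapsto\beta]\in\mathcal A((X\setminus\{x\})\cup Y)$ is $\beta\cdot\sum_{Z\subseteq X,\,x\in Z}\alpha_Z\prod_{x'\in Z\setminus\{x\}}\mathsf F_{x'}+\sum_{Z\subseteq X,\,x\notin Z}\alpha_Z\prod_{x'\in Z}\mathsf F_{x'}$, computed in $\mathcal A((X\setminus\{x\})\cup Y)$. Algorithm $\mathtt{SFPA}(T)$: set $\mathsf{ToDo}\leftarrow V$. While $\mathsf{ToDo}\neq\varnothing$: pick $v\in\mathsf{ToDo}$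 minimal w.r.t. $\preceq$ and remove it from $\mathsf{ToDo}$. If $\gamma(v)=\mathtt{BE}$, set $g_v\leftarrow\mathrm{p}(v)$. Otherwise set $g_v\leftarrow 1-\prod_{w\in\mathrm{ch}(v)}(1-\mathsf F_w)$ if $\gamma(v)=\mathtt{OR}$, and $g_v\leftarrow\prod_{w\in\mathrm{ch}(v)}\mathsf F_w$ if $\gamma(v)=\mathtt{AND}$ (variables indexed by nodes); then set $\mathsf{ToDo}_v\leftarrow\{w\in V\mid \mathrm{id}(w)=v\}$ and, while $\mathsf{ToDo}_v\neq\varnothing$, pick $w\in\mathsf{ToDo}_v$ maximal w.r.t. $\preceq$, remove it from $\mathsf{ToDo}_v$, and set $g_v\leftarrow g_v[\mathsf F_w\mapsto g_w]$. Finally return $g_{R_T}$. *)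

theory Defs
  imports "HOL-Probability.Probability"
begin

datatype gate = OR | AND | BE

text \<open>A fault tree is given by a node set V, an edge set E (edges point from a node
  to its children), a root R, a type map gam and a probability map p.\<close>

definition ch :: "('v \<times> 'v) set \<Rightarrow> 'v \<Rightarrow> 'v set" where
  "ch E v = {w. (v, w) \<in> E}"

definition fault_tree ::
  "'v set \<Rightarrow> ('v \<times> 'v) set \<Rightarrow> 'v \<Rightarrow> ('v \<Rightarrow> gate) \<Rightarrow> ('v \<Rightarrow> real) \<Rightarrow> bool" where
  "fault_tree V E R gam p \<longleftrightarrow>
     finite V \<and> E \<subseteq> V \<times> V \<and> acyclic E \<and> R \<in> V \<and>
     (\<forall>v\<in>V. (R, v) \<in> E\<^sup>*) \<and>
     (\<forall>v\<in>V. gam v = BE \<longleftrightarrow> ch E v = {}) \<and>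
     (\<forall>v\<in>V. gam v = BE \<longrightarrow> 0 \<le> p v \<and> p v \<le> 1)"

definition BEs :: "'v set \<Rightarrow> ('v \<Rightarrow> gate) \<Rightarrow> 'v set" where
  "BEs V gam = {v\<in>V. gam v = BE}"

text \<open>Structure function: sfun E gam f v holds iff S_T(v,f) = 1 (least solution of the
  defining recursion; on a finite DAG it is the unique solution).\<close>

inductive sfun :: "('v \<times> 'v) set \<Rightarrow> ('v \<Rightarrow> gate) \<Rightarrow> ('v \<Rightarrow> bool) \<Rightarrow> 'v \<Rightarrow> bool"
  for E gam f where
  sfun_BE:  "gam v = BE \<Longrightarrow> f v \<Longrightarrow> sfun E gam f v"
| sfun_OR:  "gam v = OR \<Longrightarrow> (v, w) \<in> E \<Longrightarrow> sfun E gam f w \<Longrightarrow> sfun E gam f v"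
| sfun_AND: "gam v = AND \<Longrightarrow> (\<forall>w. (v, w) \<in> E \<longrightarrow> sfun E gam f w) \<Longrightarrow> sfun E gam f v"

definition unreliability ::
  "'v set \<Rightarrow> ('v \<times> 'v) set \<Rightarrow> 'v \<Rightarrow> ('v \<Rightarrow> gate) \<Rightarrow> ('v \<Rightarrow> real) \<Rightarrow> real" where
  "unreliability V E R gam p =
     measure_pmf.prob (Pi_pmf (BEs V gam) False (\<lambda>v. bernoulli_pmf (p v)))
       {f. sfun E gam f R}"

text \<open>leq E x y means x \<preceq> y: a directed path (possibly of length 0) from y to x.\<close>
definition leq :: "('v \<times> 'v) set \<Rightarrow> 'v \<Rightarrow> 'v \<Rightarrow> bool" where
  "leq E x y \<longleftrightarrow> (y, x) \<in> E\<^sup>*"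

definition less :: "('v \<times> 'v) set \<Rightarrow> 'v \<Rightarrow> 'v \<Rightarrow> bool" where
  "less E x y \<longleftrightarrow> leq E x y \<and> x \<noteq> y"

definition is_path :: "('v \<times> 'v) set \<Rightarrow> 'v list \<Rightarrow> bool" where
  "is_path E xs \<longleftrightarrow> xs \<noteq> [] \<and> (\<forall>i. Suc i < length xs \<longrightarrow> (xs ! i, xs ! Suc i) \<in> E)"

definition dominates :: "('v \<times> 'v) set \<Rightarrow> 'v \<Rightarrow> 'v \<Rightarrow> 'v \<Rightarrow> bool" where
  "dominates E R w v \<longleftrightarrow> less E v w \<and>
     (\<forall>xs. is_path E xs \<and> hd xs = R \<and> last xs = v \<longrightarrow> w \<in> set xs)"

text \<open>is_idom E R v w: v is the immediate dominator of w, i.e. id(w) = v.\<close>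
definition is_idom :: "('v \<times> 'v) set \<Rightarrow> 'v \<Rightarrow> 'v \<Rightarrow> 'v \<Rightarrow> bool" where
  "is_idom E R v w \<longleftrightarrow> dominates E R v w \<and> (\<forall>w'. dominates E R w' w \<longrightarrow> leq E v w')"

text \<open>An element is represented by its coefficient function Y \<mapsto> alpha_Y.\<close>
type_synonym 'v sfp = "'v set \<Rightarrow> real"

definition sfp_const :: "real \<Rightarrow> 'v sfp" where
  "sfp_const c = (\<lambda>Y. if Y = {} then c else 0)"

definition sfp_var :: "'v \<Rightarrow> 'v sfp" where
  "sfp_var x = (\<lambda>Y. if Y = {x} then 1 else 0)"

definition sfp_add :: "'v sfp \<Rightarrow> 'v sfp \<Rightarrow> 'v sfp" where
  "sfp_add a b = (\<lambda>Y. a Y + b Y)"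

definition sfp_minus :: "'v sfp \<Rightarrow> 'v sfp \<Rightarrow> 'v sfp" where
  "sfp_minus a b = (\<lambda>Y. a Y - b Y)"

definition sfp_mult :: "'v sfp \<Rightarrow> 'v sfp \<Rightarrow> 'v sfp" where
  "sfp_mult a b = (\<lambda>Y. \<Sum>(Y', Y'') \<in> {(Y', Y''). Y' \<subseteq> Y \<and> Y'' \<subseteq> Y \<and> Y' \<union> Y'' = Y}.
                        a Y' * b Y'')"

definition sfp_prod :: "('i \<Rightarrow> 'v sfp) \<Rightarrow> 'i set \<Rightarrow> 'v sfp" where
  "sfp_prod f A = Finite_Set.fold (\<lambda>w acc. sfp_mult (f w) acc) (sfp_const 1) A"

definition sfp_subst :: "'v sfp \<Rightarrow> 'v \<Rightarrow> 'v sfp \<Rightarrow> 'v sfp" where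
  "sfp_subst a x b =
     sfp_add (sfp_mult b (\<lambda>Z. if x \<notin> Z then a (insert x Z) else 0))
             (\<lambda>Z. if x \<notin> Z then a Z else 0)"

text \<open>An execution is determined by the order vs in which the outer loop picks nodes and
  the order ws v in which the inner loop for v picks the elements of ToDo_v.\<close>

definition sfpa_outer_ok :: "'v set \<Rightarrow> ('v \<times> 'v) set \<Rightarrow> 'v list \<Rightarrow> bool" where
  "sfpa_outer_ok V E vs \<longleftrightarrow> distinct vs \<and> set vs = V \<and>
     (\<forall>i < length vs. \<forall>u \<in> set (drop i vs). \<not> less E u (vs ! i))"

definition sfpa_inner_ok ::
  "'v set \<Rightarrow> ('v \<times> 'v) set \<Rightarrow> 'v \<Rightarrow> ('v \<Rightarrow> 'v list) \<Rightarrow> bool" where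
  "sfpa_inner_ok V E R ws \<longleftrightarrow> (\<forall>v\<in>V. distinct (ws v) \<and>
     set (ws v) = {w\<in>V. is_idom E R v w} \<and>
     (\<forall>j < length (ws v). \<forall>u \<in> set (drop j (ws v)). \<not> less E (ws v ! j) u))"

definition sfpa_init :: "('v \<times> 'v) set \<Rightarrow> ('v \<Rightarrow> gate) \<Rightarrow> 'v \<Rightarrow> 'v sfp" where
  "sfpa_init E gam v =
     (if gam v = OR
      then sfp_minus (sfp_const 1)
             (sfp_prod (\<lambda>w. sfp_minus (sfp_const 1) (sfp_var w)) (ch E v))
      else sfp_prod sfp_var (ch E v))"

definition sfpa_step ::
  "('v \<times> 'v) set \<Rightarrow> ('v \<Rightarrow> gate) \<Rightarrow> ('v \<Rightarrow> real) \<Rightarrow> ('v \<Rightarrow> 'v list)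
     \<Rightarrow> ('v \<Rightarrow> 'v sfp) \<Rightarrow> 'v \<Rightarrow> 'v sfp" where
  "sfpa_step E gam p ws g v =
     (if gam v = BE then sfp_const (p v)
      else foldl (\<lambda>a w. sfp_subst a w (g w)) (sfpa_init E gam v) (ws v))"

definition sfpa_run ::
  "('v \<times> 'v) set \<Rightarrow> ('v \<Rightarrow> gate) \<Rightarrow> ('v \<Rightarrow> real) \<Rightarrow> ('v \<Rightarrow> 'v list)
     \<Rightarrow> 'v list \<Rightarrow> 'v \<Rightarrow> 'v sfp" where
  "sfpa_run E gam p ws vs =
     foldl (\<lambda>g v. g(v := sfpa_step E gam p ws g v)) (\<lambda>_. sfp_const 0) vs"

end

theory Submission
  imports Defs
begin


definition ev :: "'v sfp \<Rightarrow> 'v set \<Rightarrow> real" where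
  "ev a S = sum a (Pow S)"

definition fin_supp :: "'v sfp \<Rightarrow> bool" where
  "fin_supp a \<longleftrightarrow> (\<forall>Y. infinite Y \<longrightarrow> a Y = 0)"

lemma sfp_ext:
  assumes inf: "\<And>Y. infinite Y \<Longrightarrow> a Y = b Y"
    and fin: "\<And>S. finite S \<Longrightarrow> ev a S = ev b S"
  shows "a = b"
proof
  fix Y
  show "a Y = b Y"
  proof (cases "finite Y")
    case False then show ?thesis using inf by blast
  next
    case True
    then show ?thesis
    proof (induction Y rule: finite_psubset_induct)
      case (psubset Y)
      have fP: "finite (Pow Y)" using psubset by simp
      have ea: "ev a Y = a Y + sum a (Pow Y - {Y})"
        unfolding ev_def using sum.remove[OF fP, of Y a] by simp
      have eb: "ev b Y = b Y + sum b (Pow Y - {Y})"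
        unfolding ev_def using sum.remove[OF fP, of Y b] by simp
      have "sum a (Pow Y - {Y}) = sum b (Pow Y - {Y})"
        by (rule sum.cong) (auto intro!: psubset.IH)
      with ea eb fin[OF psubset.hyps] show ?case by simp
    qed
  qed
qed

lemma sfp_mult_infinite:
  assumes inf: "infinite Y" shows "sfp_mult a b Y = 0"
proof -
  let ?P = "{(Y', Y''). Y' \<subseteq> Y \<and> Y'' \<subseteq> Y \<and> Y' \<union> Y'' = Y}"
  have sub: "Pow Y \<subseteq> snd ` ?P"
  proof
    fix Z assume Z: "Z \<in> Pow Y"
    have "(Y, Z) \<in> ?P" using Z by (simp add: Un_absorb2)
    then show "Z \<in> snd ` ?P" by (rule image_eqI[rotated]) simp
  qed
  have "infinite ?P"
  proof
    assume "finite ?P"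
    then have "finite (snd ` ?P)" by (rule finite_imageI)
    then have "finite (Pow Y)" using sub by (rule finite_subset[rotated])
    then show False using inf by simp
  qed
  then show ?thesis unfolding sfp_mult_def by (rule sum.infinite)
qed

lemma ev_mult:
  assumes "finite S" shows "ev (sfp_mult a b) S = ev a S * ev b S"
proof -
  let ?h = "\<lambda>q. a (fst q) * b (snd q)"
  let ?g = "\<lambda>q. fst q \<union> snd q"
  have "ev a S * ev b S = (\<Sum>Y'\<in>Pow S. \<Sum>Y''\<in>Pow S. a Y' * b Y'')"
    unfolding ev_def by (simp add: sum_product)
  also have "\<dots> = (\<Sum>q\<in>Pow S \<times> Pow S. ?h q)"
    by (simp add: sum.cartesian_product case_prod_beta)
  also have "\<dots> = (\<Sum>Y\<in>Pow S. sum ?h {q. q \<in> Pow S \<times> Pow S \<and> ?g q = Y})"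
    by (rule sum.group[symmetric]) (auto simp: assms)
  also have "\<dots> = ev (sfp_mult a b) S"
    unfolding ev_def sfp_mult_def
  proof (rule sum.cong[OF refl])
    fix Y assume "Y \<in> Pow S"
    then have "{q. q \<in> Pow S \<times> Pow S \<and> ?g q = Y} = {(Y', Y''). Y' \<subseteq> Y \<and> Y'' \<subseteq> Y \<and> Y' \<union> Y'' = Y}"
      by auto
    then show "sum ?h {q. q \<in> Pow S \<times> Pow S \<and> ?g q = Y} =
      (\<Sum>(Y', Y'')\<in>{(Y', Y''). Y' \<subseteq> Y \<and> Y'' \<subseteq> Y \<and> Y' \<union> Y'' = Y}. a Y' * b Y'')"
      by (simp add: case_prod_beta)
  qed
  finally show ?thesis by simp
qed

lemma ev_const: "finite S \<Longrightarrow> ev (sfp_const c) S = c"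
  unfolding ev_def sfp_const_def by (simp add: sum.delta)

lemma ev_var: "finite S \<Longrightarrow> ev (sfp_var x) S = (if x \<in> S then 1 else 0)"
  unfolding ev_def sfp_var_def by (simp add: sum.delta)

lemma ev_add: "ev (sfp_add a b) S = ev a S + ev b S"
  unfolding ev_def sfp_add_def by (simp add: sum.distrib)

lemma ev_minus: "ev (sfp_minus a b) S = ev a S - ev b S"
  unfolding ev_def sfp_minus_def by (simp add: sum_subtractf)

lemma fin_supp_const: "fin_supp (sfp_const c)"
  unfolding fin_supp_def sfp_const_def by auto
lemma fin_supp_var: "fin_supp (sfp_var c)"
  unfolding fin_supp_def sfp_var_def by auto
lemma fin_supp_mult: "fin_supp (sfp_mult a b)"
  unfolding fin_supp_def by (simp add: sfp_mult_infinite)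
lemma fin_supp_minus: "fin_supp a \<Longrightarrow> fin_supp b \<Longrightarrow> fin_supp (sfp_minus a b)"
  unfolding fin_supp_def sfp_minus_def by auto
lemma fin_supp_subst: "fin_supp a \<Longrightarrow> fin_supp (sfp_subst a x b)"
  unfolding fin_supp_def sfp_subst_def sfp_add_def by (auto simp: sfp_mult_infinite)

lemma cfc_mult: "comp_fun_commute (\<lambda>w acc. sfp_mult (f w) acc)"
proof
  fix x y
  show "(\<lambda>acc. sfp_mult (f y) acc) \<circ> (\<lambda>acc. sfp_mult (f x) acc) =
        (\<lambda>acc. sfp_mult (f x) acc) \<circ> (\<lambda>acc. sfp_mult (f y) acc)"
  proof
    fix acc
    show "((\<lambda>acc. sfp_mult (f y) acc) \<circ> (\<lambda>acc. sfp_mult (f x) acc)) acc =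
        ((\<lambda>acc. sfp_mult (f x) acc) \<circ> (\<lambda>acc. sfp_mult (f y) acc)) acc"
      by (rule sfp_ext) (auto simp: sfp_mult_infinite ev_mult)
  qed
qed

lemma sfp_prod_insert:
  assumes "finite A" "x \<notin> A"
  shows "sfp_prod f (insert x A) = sfp_mult (f x) (sfp_prod f A)"
proof -
  interpret comp_fun_commute "\<lambda>w acc. sfp_mult (f w) acc" by (rule cfc_mult)
  show ?thesis unfolding sfp_prod_def using assms by (simp add: fold_insert)
qed

lemma ev_prod:
  assumes "finite A" "finite S"
  shows "ev (sfp_prod f A) S = (\<Prod>w\<in>A. ev (f w) S)"
  using assms(1)
proof (induction A rule: finite_induct)
  case empty then show ?case by (simp add: sfp_prod_def ev_const assms)
next
  case (insert x A) then show ?case by (simp add: sfp_prod_insert ev_mult assms)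
qed

lemma fin_supp_prod:
  assumes "finite A" shows "fin_supp (sfp_prod f A)"
  using assms
proof (induction A rule: finite_induct)
  case empty then show ?case by (simp add: sfp_prod_def fin_supp_const)
next
  case (insert x A) then show ?case by (simp add: sfp_prod_insert fin_supp_mult)
qed

lemma ev_subst:
  assumes "finite S"
  shows "ev (sfp_subst a x b) S = ev b S * (ev a (insert x S) - ev a (S - {x})) + ev a (S - {x})"
proof -
  let ?a1 = "\<lambda>Z. if x \<notin> Z then a (insert x Z) else 0"
  let ?a0 = "\<lambda>Z. if x \<notin> Z then a Z else 0"
  have PS: "{Y \<in> Pow S. x \<notin> Y} = Pow (S - {x})" by auto
  have fS: "finite (Pow S)" using assms by simp
  have e1: "ev ?a1 S = (\<Sum>Y\<in>Pow (S - {x}). a (insert x Y))"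
    unfolding ev_def using sum.inter_filter[OF fS, of "\<lambda>Y. a (insert x Y)" "\<lambda>Y. x \<notin> Y"] PS
    by simp
  have e0: "ev ?a0 S = ev a (S - {x})"
    unfolding ev_def using sum.inter_filter[OF fS, of a "\<lambda>Y. x \<notin> Y"] PS
    by simp
  have fS': "finite (Pow (S - {x}))" using assms by simp
  have "ev a (insert x S) = ev a (insert x (S - {x}))" by simp
  also have "\<dots> = sum a (Pow (S - {x})) + sum a (insert x ` Pow (S - {x}))"
    unfolding ev_def Pow_insert
    by (rule sum.union_disjoint) (use assms in auto)
  also have "sum a (insert x ` Pow (S - {x})) = (\<Sum>Y\<in>Pow (S - {x}). a (insert x Y))"
    by (rule sum.reindex_cong[where l = "insert x"]) (auto simp: inj_on_def)
  finally have "ev a (insert x S) = ev a (S - {x}) + (\<Sum>Y\<in>Pow (S - {x}). a (insert x Y))"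
    unfolding ev_def by simp
  then show ?thesis
    unfolding sfp_subst_def ev_add ev_mult[OF assms] using e1 e0 by simp
qed




lemma is_path_Cons:
  "is_path E (x # xs) \<longleftrightarrow> (xs = [] \<or> ((x, hd xs) \<in> E \<and> is_path E xs))"
proof (cases xs)
  case Nil then show ?thesis by (simp add: is_path_def)
next
  case (Cons y ys)
  have "(\<forall>i. Suc i < length (x # xs) \<longrightarrow> ((x # xs) ! i, (x # xs) ! Suc i) \<in> E) \<longleftrightarrow>
        (x, y) \<in> E \<and> (\<forall>i. Suc i < length xs \<longrightarrow> (xs ! i, xs ! Suc i) \<in> E)"
  proof
    assume H: "\<forall>i. Suc i < length (x # xs) \<longrightarrow> ((x # xs) ! i, (x # xs) ! Suc i) \<in> E"
    have "(x, y) \<in> E" using H[rule_format, of 0] Cons by simp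
    moreover have "\<forall>i. Suc i < length xs \<longrightarrow> (xs ! i, xs ! Suc i) \<in> E"
    proof (intro allI impI)
      fix i assume "Suc i < length xs"
      then show "(xs ! i, xs ! Suc i) \<in> E" using H[rule_format, of "Suc i"] by simp
    qed
    ultimately show "(x, y) \<in> E \<and> (\<forall>i. Suc i < length xs \<longrightarrow> (xs ! i, xs ! Suc i) \<in> E)" by blast
  next
    assume H: "(x, y) \<in> E \<and> (\<forall>i. Suc i < length xs \<longrightarrow> (xs ! i, xs ! Suc i) \<in> E)"
    show "\<forall>i. Suc i < length (x # xs) \<longrightarrow> ((x # xs) ! i, (x # xs) ! Suc i) \<in> E"
    proof (intro allI impI)
      fix i assume "Suc i < length (x # xs)"
      then show "((x # xs) ! i, (x # xs) ! Suc i) \<in> E"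
        using H Cons by (cases i) auto
    qed
  qed
  then show ?thesis using Cons by (simp add: is_path_def)
qed

lemma is_path_append:
  assumes "is_path E xs" "is_path E ys" "last xs = hd ys"
  shows "is_path E (xs @ tl ys)"
  using assms
proof (induction xs)
  case Nil then show ?case by (simp add: is_path_def)
next
  case (Cons x xs)
  show ?case
  proof (cases "xs = []")
    case True
    then have "ys \<noteq> []" "x = hd ys" using Cons.prems by (auto simp: is_path_def)
    then show ?thesis using True Cons.prems by simp
  next
    case False
    then have "(x, hd xs) \<in> E" "is_path E xs" using Cons.prems(1) by (auto simp: is_path_Cons)
    moreover have "is_path E (xs @ tl ys)" using Cons False calculation by auto
    ultimately show ?thesis using False by (simp add: is_path_Cons)
  qed
qed

lemma is_path_nonempty: "is_path E xs \<Longrightarrow> xs \<noteq> []"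
  by (simp add: is_path_def)

lemma path_nth:
  assumes "is_path E xs" "i \<le> j" "j < length xs"
  shows "(xs ! i, xs ! j) \<in> E\<^sup>*"
  using assms(2,3)
proof (induction j)
  case 0 then show ?case by simp
next
  case (Suc j)
  show ?case
  proof (cases "i = Suc j")
    case True then show ?thesis by simp
  next
    case False
    then have "(xs ! i, xs ! j) \<in> E\<^sup>*" using Suc by simp
    moreover have "(xs ! j, xs ! Suc j) \<in> E" using assms(1) Suc.prems by (simp add: is_path_def)
    ultimately show ?thesis by simp
  qed
qed

lemma path_mem:
  assumes "is_path E xs" "z \<in> set xs"
  shows "(hd xs, z) \<in> E\<^sup>*" "(z, last xs) \<in> E\<^sup>*"
proof -
  have ne: "xs \<noteq> []" using assms by (simp add: is_path_def)
  obtain k where k: "k < length xs" "z = xs ! k" using assms(2) by (metis in_set_conv_nth)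
  show "(hd xs, z) \<in> E\<^sup>*" using path_nth[OF assms(1), of 0 k] k ne by (simp add: hd_conv_nth)
  show "(z, last xs) \<in> E\<^sup>*" using path_nth[OF assms(1), of k "length xs - 1"] k ne
    by (simp add: last_conv_nth)
qed

lemma path_comparable:
  assumes "is_path E xs" "a \<in> set xs" "b \<in> set xs"
  shows "(a, b) \<in> E\<^sup>* \<or> (b, a) \<in> E\<^sup>*"
proof -
  obtain i where i: "i < length xs" "a = xs ! i" using assms(2) by (metis in_set_conv_nth)
  obtain j where j: "j < length xs" "b = xs ! j" using assms(3) by (metis in_set_conv_nth)
  show ?thesis
  proof (cases "i \<le> j")
    case True then show ?thesis using path_nth[OF assms(1) True j(1)] i j by simp
  next
    case False then show ?thesis using path_nth[OF assms(1), of j i] i j by simp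
  qed
qed

lemma path_exists:
  assumes "(x, y) \<in> E\<^sup>*"
  shows "\<exists>xs. is_path E xs \<and> hd xs = x \<and> last xs = y"
  using assms
proof (induction rule: rtrancl_induct)
  case base then show ?case by (intro exI[of _ "[x]"]) (simp add: is_path_def)
next
  case (step y z)
  then obtain xs where xs: "is_path E xs" "hd xs = x" "last xs = y" by blast
  have p2: "is_path E [y, z]" using step by (simp add: is_path_Cons)
  have "is_path E (xs @ tl [y, z])" by (rule is_path_append[OF xs(1) p2]) (simp add: xs)
  moreover have "hd (xs @ [z]) = x" "last (xs @ [z]) = z"
    using xs is_path_nonempty[OF xs(1)] by auto
  ultimately show ?case by (intro exI[of _ "xs @ [z]"]) simp
qed

lemma path_prefix:
  assumes "is_path E xs" "b \<in> set xs"
  shows "\<exists>ys. is_path E ys \<and> hd ys = hd xs \<and> last ys = b \<and> set ys \<subseteq> set xs"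
proof -
  obtain i where i: "i < length xs" "b = xs ! i" using assms(2) by (metis in_set_conv_nth)
  let ?ys = "take (Suc i) xs"
  have "is_path E ?ys" using assms(1) i unfolding is_path_def by auto
  moreover have "hd ?ys = hd xs" using i by (cases xs) auto
  moreover have "last ?ys = b" using i by (simp add: take_Suc_conv_app_nth)
  moreover have "set ?ys \<subseteq> set xs" by (rule set_take_subset)
  ultimately show ?thesis by blast
qed

locale FT =
  fixes V :: "'v set" and E :: "('v \<times> 'v) set" and R :: 'v
    and gam :: "'v \<Rightarrow> gate" and p :: "'v \<Rightarrow> real"
  assumes ft: "fault_tree V E R gam p"
begin

lemma finV: "finite V" and EV: "E \<subseteq> V \<times> V" and acyc: "acyclic E" and RV: "R \<in> V"
  and reach: "v \<in> V \<Longrightarrow> (R, v) \<in> E\<^sup>*"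
  and leaf: "v \<in> V \<Longrightarrow> gam v = BE \<longleftrightarrow> ch E v = {}"
  and prob01: "v \<in> V \<Longrightarrow> gam v = BE \<Longrightarrow> 0 \<le> p v \<and> p v \<le> 1"
  using ft unfolding fault_tree_def by auto

lemma finE: "finite E"
  using EV finV by (meson finite_SigmaI finite_subset)

lemma wfE: "wf (E\<inverse>)"
  using finE acyc by (rule finite_acyclic_wf_converse)

lemma wfE': "wf E"
  using finE acyc by (rule finite_acyclic_wf)

lemma edge_V: "(x, y) \<in> E \<Longrightarrow> x \<in> V \<and> y \<in> V"
  using EV by auto

lemma rtr_V: "(x, y) \<in> E\<^sup>* \<Longrightarrow> x \<noteq> y \<Longrightarrow> x \<in> V \<and> y \<in> V"
  by (metis converse_rtranclE edge_V rtranclE)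

lemma rtr_V2: "(x, y) \<in> E\<^sup>* \<Longrightarrow> x \<in> V \<Longrightarrow> y \<in> V"
  using rtr_V by blast

lemma antisym_E: "(x, y) \<in> E\<^sup>* \<Longrightarrow> (y, x) \<in> E\<^sup>* \<Longrightarrow> x = y"
  using acyc unfolding acyclic_def
  by (metis rtrancl_eq_or_trancl trancl_rtrancl_trancl)

lemma dom_basic:
  assumes "dominates E R a u"
  shows "a \<in> V" "u \<in> V" "(a, u) \<in> E\<^sup>*" "a \<noteq> u"
  using assms rtr_V unfolding dominates_def less_def leq_def by auto

lemma dom_path:
  assumes "dominates E R a u" "is_path E xs" "hd xs = R" "last xs = u"
  shows "a \<in> set xs"
  using assms unfolding dominates_def by blast

lemma dom_trans:
  assumes ab: "dominates E R a b" and bc: "dominates E R b c"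
  shows "dominates E R a c"
proof -
  have ac: "(a, c) \<in> E\<^sup>*" using dom_basic(3)[OF ab] dom_basic(3)[OF bc] by simp
  have "a \<noteq> c"
  proof
    assume "a = c"
    then have "(b, a) \<in> E\<^sup>*" using dom_basic(3)[OF bc] by simp
    then show False using antisym_E dom_basic(3,4)[OF ab] by blast
  qed
  moreover have "a \<in> set xs" if xs: "is_path E xs" "hd xs = R" "last xs = c" for xs
  proof -
    have "b \<in> set xs" using dom_path[OF bc xs] .
    then obtain ys where "is_path E ys" "hd ys = hd xs" "last ys = b" "set ys \<subseteq> set xs"
      using path_prefix[OF xs(1)] by blast
    then show ?thesis using dom_path[OF ab, of ys] xs by auto
  qed
  ultimately show ?thesis using ac unfolding dominates_def less_def leq_def by blast
qed

lemma dom_D4: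
  assumes au: "dominates E R a u" and bu: "(b, u) \<in> E\<^sup>*" and ba: "(b, a) \<notin> E\<^sup>*"
  shows "dominates E R a b"
proof -
  have bV: "b \<in> V" using bu dom_basic(2)[OF au] rtr_V by blast
  have onp: "a \<in> set xs" if xs: "is_path E xs" "hd xs = R" "last xs = b" for xs
  proof -
    obtain zs where zs: "is_path E zs" "hd zs = b" "last zs = u" using path_exists[OF bu] by blast
    have p: "is_path E (xs @ tl zs)" by (rule is_path_append[OF xs(1) zs(1)]) (simp add: xs zs)
    have ne: "xs \<noteq> []" "zs \<noteq> []" using xs zs by (auto simp: is_path_def)
    have "hd (xs @ tl zs) = R" using xs ne by simp
    moreover have "last (xs @ tl zs) = u"
    proof (cases "tl zs = []")
      case True
      then have "zs = [b]" using ne zs by (metis hd_Cons_tl)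
      then show ?thesis using True xs zs by simp
    next
      case False then show ?thesis using zs ne by (simp add: last_tl)
    qed
    ultimately have "a \<in> set (xs @ tl zs)" using dom_path[OF au p] by blast
    moreover have "a \<notin> set (tl zs)"
    proof
      assume "a \<in> set (tl zs)"
      then have "a \<in> set zs" by (meson list.set_sel(2) ne(2))
      then show False using path_mem(1)[OF zs(1)] zs ba by blast
    qed
    ultimately show ?thesis by auto
  qed
  obtain xs where xs: "is_path E xs" "hd xs = R" "last xs = b" using path_exists[OF reach[OF bV]] by blast
  have "(a, b) \<in> E\<^sup>*" using path_mem(2)[OF xs(1) onp[OF xs]] xs by simp
  moreover have "a \<noteq> b" using ba by auto
  ultimately show ?thesis using onp unfolding dominates_def less_def leq_def by blast
qed

lemma dom_D6:
  assumes au: "dominates E R a u" and bu: "(b, u) \<in> E"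
  shows "(a, b) \<in> E\<^sup>*"
proof -
  have bV: "b \<in> V" using bu edge_V by blast
  obtain xs where xs: "is_path E xs" "hd xs = R" "last xs = b" using path_exists[OF reach[OF bV]] by blast
  have p2: "is_path E [b, u]" using bu by (simp add: is_path_Cons)
  have p: "is_path E (xs @ tl [b, u])" by (rule is_path_append[OF xs(1) p2]) (simp add: xs)
  have ne: "xs \<noteq> []" using xs by (auto simp: is_path_def)
  have "a \<in> set (xs @ [u])" using dom_path[OF au p] xs ne by simp
  then have "a \<in> set xs" using dom_basic(4)[OF au] by simp
  then show ?thesis using path_mem(2)[OF xs(1)] xs by simp
qed

lemma dom_comparable:
  assumes "a = u \<or> dominates E R a u" "b = u \<or> dominates E R b u" "u \<in> V"
  shows "(a, b) \<in> E\<^sup>* \<or> (b, a) \<in> E\<^sup>*"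
proof -
  obtain xs where xs: "is_path E xs" "hd xs = R" "last xs = u" using path_exists[OF reach[OF assms(3)]] by blast
  have "u \<in> set xs" using xs by (auto simp: is_path_def)
  then have "a \<in> set xs" "b \<in> set xs" using assms dom_path[OF _ xs] by auto
  then show ?thesis using path_comparable[OF xs(1)] by blast
qed

lemma dom_R: "u \<in> V \<Longrightarrow> u \<noteq> R \<Longrightarrow> dominates E R R u"
  unfolding dominates_def less_def leq_def using reach
  by (auto simp: is_path_def)

end



inductive val :: "('v \<times> 'v) set \<Rightarrow> ('v \<Rightarrow> gate) \<Rightarrow> 'v set \<Rightarrow> 'v set \<Rightarrow> 'v \<Rightarrow> bool"
  for E gam C X where
  val_cut: "x \<in> C \<Longrightarrow> x \<in> X \<Longrightarrow> val E gam C X x"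
| val_BE: "gam x = BE \<Longrightarrow> x \<in> X \<Longrightarrow> val E gam C X x"
| val_OR: "x \<notin> C \<Longrightarrow> gam x = OR \<Longrightarrow> (x, c) \<in> E \<Longrightarrow> val E gam C X c \<Longrightarrow> val E gam C X x"
| val_AND: "x \<notin> C \<Longrightarrow> gam x = AND \<Longrightarrow> (\<forall>c. (x, c) \<in> E \<longrightarrow> val E gam C X c) \<Longrightarrow> val E gam C X x"

lemma val_unfold:
  "val E gam C X x \<longleftrightarrow>
    (if x \<in> C \<or> gam x = BE then x \<in> X
     else if gam x = OR then (\<exists>c. (x, c) \<in> E \<and> val E gam C X c)
     else (\<forall>c. (x, c) \<in> E \<longrightarrow> val E gam C X c))"
proof
  assume "val E gam C X x" then show "(if x \<in> C \<or> gam x = BE then x \<in> X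
     else if gam x = OR then (\<exists>c. (x, c) \<in> E \<and> val E gam C X c)
     else (\<forall>c. (x, c) \<in> E \<longrightarrow> val E gam C X c))"
    by cases auto
next
  assume H: "(if x \<in> C \<or> gam x = BE then x \<in> X
     else if gam x = OR then (\<exists>c. (x, c) \<in> E \<and> val E gam C X c)
     else (\<forall>c. (x, c) \<in> E \<longrightarrow> val E gam C X c))"
  show "val E gam C X x"
  proof (cases "x \<in> C")
    case True then show ?thesis using H by (auto intro: val_cut)
  next
    case nC: False
    show ?thesis
    proof (cases "gam x")
      case OR then show ?thesis using H nC by (auto intro: val_OR)
    next
      case AND then show ?thesis using H nC by (auto intro: val_AND)
    next
      case BE then show ?thesis using H nC by (auto intro: val_BE)
    qed
  qed
qed

lemma sfun_val: "sfun E gam f x \<longleftrightarrow> val E gam {} {u. f u} x"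
proof
  assume "sfun E gam f x" then show "val E gam {} {u. f u} x"
    by induction (auto intro: val.intros)
next
  assume "val E gam {} {u. f u} x" then show "sfun E gam f x"
    by induction (auto intro: sfun.intros)
qed

definition wt :: "('v \<Rightarrow> real) \<Rightarrow> 'v set \<Rightarrow> 'v set \<Rightarrow> real" where
  "wt p A F = (\<Prod>b\<in>A. if b \<in> F then p b else 1 - p b)"

lemma sum_wt_split:
  assumes fA: "finite A" and fB: "finite B" and dj: "A \<inter> B = {}"
  shows "(\<Sum>F\<in>Pow (A \<union> B). wt p (A \<union> B) F * phi F) =
         (\<Sum>F1\<in>Pow A. wt p A F1 * (\<Sum>F2\<in>Pow B. wt p B F2 * phi (F1 \<union> F2)))"
proof -
  let ?u = "\<lambda>(X, Y). X \<union> Y"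
  have img: "Pow (A \<union> B) = ?u ` (Pow A \<times> Pow B)"
  proof
    show "Pow (A \<union> B) \<subseteq> ?u ` (Pow A \<times> Pow B)"
    proof
      fix F assume "F \<in> Pow (A \<union> B)"
      then show "F \<in> ?u ` (Pow A \<times> Pow B)" by (intro image_eqI[where x="(F \<inter> A, F \<inter> B)"]) auto
    qed
  qed auto
  have inj: "inj_on ?u (Pow A \<times> Pow B)"
  proof (rule inj_onI)
    fix q q' assume H: "q \<in> Pow A \<times> Pow B" "q' \<in> Pow A \<times> Pow B" "?u q = ?u q'"
    have e: "?u q = fst q \<union> snd q" "?u q' = fst q' \<union> snd q'" by (simp_all add: case_prod_beta)
    have "fst q = (fst q \<union> snd q) \<inter> A" "fst q' = (fst q' \<union> snd q') \<inter> A" using H dj by auto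
    moreover have "snd q = (fst q \<union> snd q) \<inter> B" "snd q' = (fst q' \<union> snd q') \<inter> B" using H dj by auto
    ultimately show "q = q'" using H(3) e by (metis prod_eq_iff)
  qed
  have wsplit: "wt p (A \<union> B) (X \<union> Y) = wt p A X * wt p B Y" if "X \<subseteq> A" "Y \<subseteq> B" for X Y
  proof -
    have "wt p (A \<union> B) (X \<union> Y) = (\<Prod>b\<in>A. if b \<in> X \<union> Y then p b else 1 - p b) *
                                    (\<Prod>b\<in>B. if b \<in> X \<union> Y then p b else 1 - p b)"
      unfolding wt_def by (rule prod.union_disjoint[OF fA fB dj])
    also have "(\<Prod>b\<in>A. if b \<in> X \<union> Y then p b else 1 - p b) = wt p A X"
      unfolding wt_def by (rule prod.cong) (use that dj in auto)
    also have "(\<Prod>b\<in>B. if b \<in> X \<union> Y then p b else 1 - p b) = wt p B Y"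
      unfolding wt_def by (rule prod.cong) (use that dj in auto)
    finally show ?thesis .
  qed
  have "(\<Sum>F\<in>Pow (A \<union> B). wt p (A \<union> B) F * phi F) =
        (\<Sum>q\<in>Pow A \<times> Pow B. wt p (A \<union> B) (?u q) * phi (?u q))"
    unfolding img by (rule sum.reindex[OF inj, unfolded comp_def])
  also have "\<dots> = (\<Sum>q\<in>Pow A \<times> Pow B. wt p A (fst q) * (wt p B (snd q) * phi (fst q \<union> snd q)))"
    by (rule sum.cong) (auto simp: wsplit)
  also have "\<dots> = (\<Sum>F1\<in>Pow A. \<Sum>F2\<in>Pow B. wt p A F1 * (wt p B F2 * phi (F1 \<union> F2)))"
    by (simp add: sum.cartesian_product case_prod_beta)
  also have "\<dots> = (\<Sum>F1\<in>Pow A. wt p A F1 * (\<Sum>F2\<in>Pow B. wt p B F2 * phi (F1 \<union> F2)))"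
    by (simp add: sum_distrib_left)
  finally show ?thesis .
qed

lemma sum_wt_1:
  assumes "finite A" shows "(\<Sum>F\<in>Pow A. wt p A F) = 1"
  using assms
proof (induction A rule: finite_induct)
  case empty then show ?case by (simp add: wt_def)
next
  case (insert a A)
  have s1: "(\<Sum>F2\<in>Pow {a}. wt p {a} F2 * 1) = 1"
    by (simp add: wt_def Pow_insert)
  have "(\<Sum>F\<in>Pow (A \<union> {a}). wt p (A \<union> {a}) F * 1) =
        (\<Sum>F1\<in>Pow A. wt p A F1 * (\<Sum>F2\<in>Pow {a}. wt p {a} F2 * 1))"
    by (rule sum_wt_split) (use insert in auto)
  then show ?case using s1 insert by simp
qed

definition ind :: "bool \<Rightarrow> real" where "ind b = (if b then 1 else 0)"

context FT
begin

definition B0 where "B0 = BEs V gam"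
definition reg where "reg w = {u\<in>V. u = w \<or> dominates E R w u}"
definition Cv where "Cv u = {x\<in>V. less E x u} - reg u"
definition Ex :: "'v set \<Rightarrow> ('v set \<Rightarrow> real) \<Rightarrow> real" where
  "Ex D phi = (\<Sum>F\<in>Pow (D \<inter> B0). wt p (D \<inter> B0) F * phi F)"
definition DW where "DW W = \<Union> (reg ` W)"
definition CW where "CW v W = {x\<in>V. less E x v} - DW W"

definition Inv where
  "Inv u a \<longleftrightarrow> fin_supp a \<and>
     (\<forall>S. finite S \<longrightarrow> ev a S = Ex (reg u) (\<lambda>F. ind (val E gam (Cv u) ((S \<inter> Cv u) \<union> F) u)))"
definition InvW where
  "InvW v W a \<longleftrightarrow> fin_supp a \<and>
     (\<forall>S. finite S \<longrightarrow> ev a S = Ex (DW W) (\<lambda>F. ind (val E gam (CW v W) ((S \<inter> CW v W) \<union> F) v)))"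

lemma finB0: "finite B0" using finV unfolding B0_def BEs_def by simp
lemma B0V: "B0 \<subseteq> V" unfolding B0_def BEs_def by auto

lemma Ex_union:
  assumes "D1 \<inter> D2 = {}"
  shows "Ex (D1 \<union> D2) phi = Ex D1 (\<lambda>F1. Ex D2 (\<lambda>F2. phi (F1 \<union> F2)))"
proof -
  have e: "(D1 \<union> D2) \<inter> B0 = (D1 \<inter> B0) \<union> (D2 \<inter> B0)" by auto
  show ?thesis unfolding Ex_def e
    by (rule sum_wt_split) (use assms finB0 in auto)
qed

lemma Ex_const: "Ex D (\<lambda>_. c) = c"
proof -
  have "Ex D (\<lambda>_. c) = (\<Sum>F\<in>Pow (D \<inter> B0). wt p (D \<inter> B0) F) * c"
    unfolding Ex_def by (simp add: sum_distrib_right)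
  also have "\<dots> = c" using sum_wt_1[of "D \<inter> B0" p] finB0 by simp
  finally show ?thesis .
qed

lemma Ex_cong: "(\<And>F. F \<subseteq> D \<inter> B0 \<Longrightarrow> phi F = psi F) \<Longrightarrow> Ex D phi = Ex D psi"
  unfolding Ex_def by (rule sum.cong) auto

lemma Ex_lin: "Ex D (\<lambda>F. c0 F + q * (c1 F - c0 F)) = Ex D c0 + q * (Ex D c1 - Ex D c0)"
  unfolding Ex_def by (simp add: algebra_simps sum.distrib sum_subtractf sum_distrib_left)

lemma Ex_if: "Ex D (\<lambda>F. if b F then c1 else c0) = c0 + Ex D (\<lambda>F. ind (b F)) * (c1 - c0)"
proof -
  have "Ex D (\<lambda>F. if b F then c1 else c0) = Ex D (\<lambda>F. c0 + (c1 - c0) * ind (b F))"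
    by (rule Ex_cong) (simp add: ind_def)
  also have "\<dots> = (\<Sum>F\<in>Pow (D \<inter> B0). c0 * (wt p (D \<inter> B0) F * 1) + (c1 - c0) * (wt p (D \<inter> B0) F * ind (b F)))"
    unfolding Ex_def by (rule sum.cong) (simp_all add: algebra_simps)
  also have "\<dots> = c0 * Ex D (\<lambda>_. 1) + (c1 - c0) * Ex D (\<lambda>F. ind (b F))"
    unfolding Ex_def by (simp add: sum.distrib sum_distrib_left)
  finally show ?thesis by (simp add: Ex_const)
qed

lemma val_agree:
  assumes yN: "y \<in> N"
   and st: "\<And>x. x \<in> N \<Longrightarrow> x \<notin> K \<Longrightarrow> (x \<in> C1 \<or> gam x = BE) = (x \<in> C2 \<or> gam x = BE)"
   and mem: "\<And>x. x \<in> N \<Longrightarrow> x \<notin> K \<Longrightarrow> x \<in> C1 \<or> gam x = BE \<Longrightarrow> (x \<in> X1 \<longleftrightarrow> x \<in> X2)"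
   and cl: "\<And>x c. x \<in> N \<Longrightarrow> x \<notin> K \<Longrightarrow> x \<notin> C1 \<Longrightarrow> gam x \<noteq> BE \<Longrightarrow> (x, c) \<in> E \<Longrightarrow> c \<in> N"
   and kk: "\<And>x. x \<in> N \<Longrightarrow> x \<in> K \<Longrightarrow> val E gam C1 X1 x \<longleftrightarrow> val E gam C2 X2 x"
  shows "val E gam C1 X1 y \<longleftrightarrow> val E gam C2 X2 y"
proof -
  have "y \<in> N \<longrightarrow> (val E gam C1 X1 y \<longleftrightarrow> val E gam C2 X2 y)"
  proof (induction y rule: wf_induct[OF wfE])
    fix y assume IH: "\<forall>z. (z, y) \<in> E\<inverse> \<longrightarrow> z \<in> N \<longrightarrow> (val E gam C1 X1 z \<longleftrightarrow> val E gam C2 X2 z)"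
    show "y \<in> N \<longrightarrow> (val E gam C1 X1 y \<longleftrightarrow> val E gam C2 X2 y)"
    proof
      assume yN: "y \<in> N"
      show "val E gam C1 X1 y \<longleftrightarrow> val E gam C2 X2 y"
      proof (cases "y \<in> K")
        case True then show ?thesis using kk yN by blast
      next
        case nK: False
        show ?thesis
        proof (cases "y \<in> C1 \<or> gam y = BE")
          case True
          then have T2: "y \<in> C2 \<or> gam y = BE" using st[OF yN nK] by blast
          have "val E gam C1 X1 y \<longleftrightarrow> y \<in> X1" using True val_unfold[of E gam C1 X1 y] by simp
          moreover have "val E gam C2 X2 y \<longleftrightarrow> y \<in> X2" using T2 val_unfold[of E gam C2 X2 y] by simp
          ultimately show ?thesis using mem[OF yN nK True] by simp
        next
          case False
          then have F2: "\<not> (y \<in> C2 \<or> gam y = BE)" using st[OF yN nK] by blast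
          have ch: "\<And>c. (y, c) \<in> E \<Longrightarrow> (val E gam C1 X1 c \<longleftrightarrow> val E gam C2 X2 c)"
            using IH cl[OF yN nK] False by blast
          have e1: "val E gam C1 X1 y \<longleftrightarrow> (if gam y = OR then (\<exists>c. (y, c) \<in> E \<and> val E gam C1 X1 c)
             else (\<forall>c. (y, c) \<in> E \<longrightarrow> val E gam C1 X1 c))"
            using False val_unfold[of E gam C1 X1 y] by simp
          have e2: "val E gam C2 X2 y \<longleftrightarrow> (if gam y = OR then (\<exists>c. (y, c) \<in> E \<and> val E gam C2 X2 c)
             else (\<forall>c. (y, c) \<in> E \<longrightarrow> val E gam C2 X2 c))"
            using F2 val_unfold[of E gam C2 X2 y] by simp
          show ?thesis unfolding e1 e2 using ch by auto
        qed
      qed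
    qed
  qed
  then show ?thesis using yN by blast
qed

lemma reg_V: "reg w \<subseteq> V" unfolding reg_def by auto
lemma reg_rtr: "u \<in> reg w \<Longrightarrow> (w, u) \<in> E\<^sup>*"
  unfolding reg_def using dom_basic(3) by auto

lemma idom_dom: "is_idom E R v w \<Longrightarrow> dominates E R v w"
  unfolding is_idom_def by blast
lemma idom_less: "is_idom E R v w \<Longrightarrow> (v, w) \<in> E\<^sup>* \<and> v \<noteq> w \<and> w \<in> V \<and> v \<in> V"
  using dom_basic[OF idom_dom] by blast

lemma reg_disj:
  assumes iwi: "is_idom E R v wi" and iw: "is_idom E R v w" and ne: "wi \<noteq> w"
    and nl: "\<not> less E wi w" and u: "u \<in> reg wi" and wu: "(w, u) \<in> E\<^sup>*"
  shows False
proof (cases "(w, wi) \<in> E\<^sup>*")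
  case True then show False using nl ne unfolding less_def leq_def by blast
next
  case False
  have "u \<noteq> wi" using False wu by blast
  then have "dominates E R wi u" using u unfolding reg_def by blast
  then have "dominates E R wi w" using dom_D4 wu False by blast
  then have "(wi, v) \<in> E\<^sup>*" using iw unfolding is_idom_def leq_def by blast
  moreover have "(v, wi) \<in> E\<^sup>*" "v \<noteq> wi" using idom_less[OF iwi] by auto
  ultimately show False using antisym_E by blast
qed

lemma DW_all:
  assumes vV: "v \<in> V"
  shows "DW {w\<in>V. is_idom E R v w} = {u. dominates E R v u}"
proof
  show "DW {w\<in>V. is_idom E R v w} \<subseteq> {u. dominates E R v u}"
  proof
    fix u assume "u \<in> DW {w\<in>V. is_idom E R v w}"
    then obtain w where w: "is_idom E R v w" "u \<in> reg w" unfolding DW_def by blast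
    then show "u \<in> {u. dominates E R v u}"
      unfolding reg_def using idom_dom dom_trans by blast
  qed
next
  show "{u. dominates E R v u} \<subseteq> DW {w\<in>V. is_idom E R v w}"
  proof
    fix u assume "u \<in> {u. dominates E R v u}"
    then have du: "dominates E R v u" by simp
    note ub = dom_basic[OF du]
    let ?M = "{x. (x = u \<or> dominates E R x u) \<and> less E x v}"
    have uM: "u \<in> ?M" using ub unfolding less_def leq_def by auto
    obtain z where zM: "z \<in> ?M" and zmin: "\<And>y. (y, z) \<in> E\<^sup>+ \<Longrightarrow> y \<notin> ?M"
      using wfE_min[OF wf_trancl[OF wfE'] uM] by blast
    have zu: "(z, u) \<in> E\<^sup>*" using zM dom_basic(3) by auto
    have zv: "(v, z) \<in> E\<^sup>*" "z \<noteq> v" using zM unfolding less_def leq_def by auto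
    have zV: "z \<in> V" using zu ub(2) zv rtr_V by (metis rtr_V2 vV)
    have nvz: "(z, v) \<notin> E\<^sup>*" using zv antisym_E by blast
    have dvz: "dominates E R v z" by (rule dom_D4[OF du zu nvz])
    have "leq E v w'" if dw: "dominates E R w' z" for w'
    proof -
      have dwu: "w' = u \<or> dominates E R w' u"
      proof (cases "z = u")
        case True then show ?thesis using dw by simp
      next
        case False then have "dominates E R z u" using zM by simp
        then show ?thesis using dom_trans[OF dw] by blast
      qed
      have "(v, w') \<in> E\<^sup>* \<or> (w', v) \<in> E\<^sup>*"
        using dom_comparable[of v u w'] du dwu ub(2) by blast
      then show ?thesis
      proof
        assume vw: "(v, w') \<in> E\<^sup>*"
        show ?thesis
        proof (rule ccontr)
          assume nl: "\<not> leq E v w'"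
          then have "w' \<noteq> v" unfolding leq_def by auto
          then have "w' \<in> ?M" using vw dwu unfolding less_def leq_def by auto
          moreover have "(w', z) \<in> E\<^sup>+"
            using dom_basic(3,4)[OF dw] by (simp add: rtrancl_eq_or_trancl)
          ultimately show False using zmin by blast
        qed
      qed (simp add: leq_def)
    qed
    then have "is_idom E R v z" using dvz unfolding is_idom_def by blast
    moreover have "u \<in> reg z" using zM ub(2) unfolding reg_def by auto
    ultimately show "u \<in> DW {w\<in>V. is_idom E R v w}" unfolding DW_def using zV by blast
  qed
qed

lemma no_desc_leaf:
  assumes "v \<in> V" "gam v = BE" "(v, u) \<in> E\<^sup>*" shows "u = v"
proof (rule ccontr)
  assume "u \<noteq> v"
  then obtain c where "(v, c) \<in> E" using assms(3) by (metis converse_rtranclE)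
  then show False using leaf[OF assms(1)] assms(2) unfolding ch_def by auto
qed

lemma reg_leaf: "v \<in> V \<Longrightarrow> gam v = BE \<Longrightarrow> reg v = {v}"
  unfolding reg_def using no_desc_leaf dom_basic by blast

lemma Cv_leaf: "v \<in> V \<Longrightarrow> gam v = BE \<Longrightarrow> Cv v = {}"
  unfolding Cv_def less_def leq_def using no_desc_leaf by blast

lemma reg_R: "reg R = V"
  unfolding reg_def using dom_R by auto

lemma Cv_R: "Cv R = {}"
  unfolding Cv_def reg_R by auto

end



lemma prod_ind_all:
  assumes "finite A"
  shows "(\<Prod>c\<in>A. (if c \<in> S then 1 else 0 :: real)) = ind (\<forall>c\<in>A. c \<in> S)"
proof (cases "\<forall>c\<in>A. c \<in> S")
  case True then show ?thesis by (simp add: ind_def)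
next
  case False
  then obtain c where "c \<in> A" "c \<notin> S" by blast
  then show ?thesis using False assms by (simp add: ind_def prod_zero_iff)
qed

lemma prod_ind_none:
  assumes "finite A"
  shows "(\<Prod>c\<in>A. 1 - (if c \<in> S then 1 else 0 :: real)) = ind (\<forall>c\<in>A. c \<notin> S)"
proof (cases "\<forall>c\<in>A. c \<notin> S")
  case True then show ?thesis by (simp add: ind_def)
next
  case False
  then obtain c where "c \<in> A" "c \<in> S" by blast
  then show ?thesis using False assms by (simp add: ind_def prod_zero_iff)
qed

context FT
begin

lemma InvW_init:
  assumes vV: "v \<in> V" and vB: "gam v \<noteq> BE"
  shows "InvW v {} (sfpa_init E gam v)"
proof -
  have chV: "ch E v \<subseteq> V" unfolding ch_def using edge_V by auto
  have chf: "finite (ch E v)" using chV finV finite_subset by blast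
  let ?C = "CW v {}"
  have C: "?C = {x\<in>V. less E x v}" by (simp add: CW_def DW_def)
  have vC: "v \<notin> ?C" by (simp add: C less_def)
  have chC: "c \<in> ?C" if vc: "(v, c) \<in> E" for c
  proof -
    have "c \<noteq> v" using vc acyc unfolding acyclic_def by blast
    then show ?thesis using vc edge_V unfolding C less_def leq_def by auto
  qed
  have valc: "val E gam ?C X c \<longleftrightarrow> c \<in> X" if "c \<in> ?C" for c X
    using that val_unfold[of E gam ?C X c] by simp
  have Ex0: "Ex (DW {}) phi = phi {}" for phi
    by (simp add: Ex_def DW_def wt_def)
  show ?thesis unfolding InvW_def
  proof (intro conjI allI impI)
    show "fin_supp (sfpa_init E gam v)"
      unfolding sfpa_init_def by (auto intro!: fin_supp_minus fin_supp_const fin_supp_prod chf)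
  next
    fix S :: "'v set" assume fS: "finite S"
    have vv: "val E gam ?C ((S \<inter> ?C) \<union> {}) v \<longleftrightarrow>
      (if gam v = OR then (\<forall>c\<in>ch E v. c \<notin> S) \<longrightarrow> False else (\<forall>c\<in>ch E v. c \<in> S))"
      using val_unfold[of E gam ?C "(S \<inter> ?C) \<union> {}" v] vC vB valc chC
      unfolding ch_def by auto
    show "ev (sfpa_init E gam v) S =
      Ex (DW {}) (\<lambda>F. ind (val E gam ?C ((S \<inter> ?C) \<union> F) v))"
      unfolding Ex0 vv
      by (auto simp: sfpa_init_def ev_minus ev_const ev_prod ev_var fS chf prod_ind_all
          prod_ind_none ind_def)
  qed
qed

lemma Inv_BE:
  assumes vV: "v \<in> V" and vB: "gam v = BE"
  shows "Inv v (sfp_const (p v))"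
proof -
  have r: "reg v = {v}" by (rule reg_leaf[OF vV vB])
  have c: "Cv v = {}" by (rule Cv_leaf[OF vV vB])
  have vB0: "{v} \<inter> B0 = {v}" using vV vB by (auto simp: B0_def BEs_def)
  have vF: "val E gam {} F v \<longleftrightarrow> v \<in> F" for F
    using val_unfold[of E gam "{}" F v] vB by simp
  show ?thesis unfolding Inv_def r c
    by (auto simp: fin_supp_const ev_const Ex_def vB0 vF Pow_insert wt_def ind_def)
qed

lemma step_disj:
  assumes Wsub: "W \<subseteq> {x\<in>V. is_idom E R v x}"
    and iw: "is_idom E R v w" and wW: "w \<notin> W" and ord: "\<forall>wi\<in>W. \<not> less E wi w"
    and u: "u \<in> DW W" and wu: "(w, u) \<in> E\<^sup>*"
  shows False
proof -
  obtain wi where wi: "wi \<in> W" "u \<in> reg wi" using u unfolding DW_def by blast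
  have "wi \<noteq> w" using wi wW by blast
  then show False using reg_disj[of v wi w u] Wsub iw wi ord wu by auto
qed

lemma comp_lemma:
  assumes vV: "v \<in> V" and vB: "gam v \<noteq> BE"
    and Wsub: "W \<subseteq> {x\<in>V. is_idom E R v x}"
    and iw: "is_idom E R v w" and wW: "w \<notin> W" and ord: "\<forall>wi\<in>W. \<not> less E wi w"
    and F1: "F1 \<subseteq> DW W \<inter> B0" and F2: "F2 \<subseteq> reg w \<inter> B0"
  shows "val E gam (CW v W - reg w) ((S \<inter> (CW v W - reg w)) \<union> (F1 \<union> F2)) v \<longleftrightarrow>
         val E gam (CW v W) (((if val E gam (Cv w) ((S \<inter> Cv w) \<union> F2) w then insert w S else S - {w})
            \<inter> CW v W) \<union> F1) v"
proof -
  define C where "C = CW v W"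
  define C' where "C' = C - reg w"
  define X' where "X' = (S \<inter> C') \<union> (F1 \<union> F2)"
  define Cw where "Cw = Cv w"
  define Xw where "Xw = (S \<inter> Cw) \<union> F2"
  define bw where "bw = val E gam Cw Xw w"
  define S' where "S' = (if bw then insert w S else S - {w})"
  define Xb where "Xb = (S' \<inter> C) \<union> F1"
  note wl = idom_less[OF iw]
  have disj: "\<And>u. u \<in> DW W \<Longrightarrow> (w, u) \<in> E\<^sup>* \<Longrightarrow> False"
    using step_disj[OF Wsub iw wW ord] by blast
  have lessv: "less E x v" if "(w, x) \<in> E\<^sup>*" for x
  proof -
    have "(v, x) \<in> E\<^sup>*" using wl that by (meson rtrancl_trans)
    moreover have "x \<noteq> v" using that wl antisym_E by blast
    ultimately show ?thesis unfolding less_def leq_def by simp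
  qed
  have inC: "x \<in> C" if "x \<in> V" "(w, x) \<in> E\<^sup>*" for x
    using that lessv disj unfolding C_def CW_def by blast
  have wreg: "w \<in> reg w" using wl unfolding reg_def by simp
  have Cw_iff: "x \<in> Cw \<longleftrightarrow> x \<notin> reg w" if "x \<in> V" "(w, x) \<in> E\<^sup>*" for x
  proof -
    have "x \<notin> reg w \<Longrightarrow> x \<noteq> w" using wreg by blast
    then show ?thesis using that unfolding Cw_def Cv_def less_def leq_def by blast
  qed
  have C'_iff: "x \<in> C' \<longleftrightarrow> x \<notin> reg w" if "x \<in> V" "(w, x) \<in> E\<^sup>*" for x
    using inC[OF that] unfolding C'_def by blast
  have F1D: "x \<in> DW W" if "x \<in> F1" for x using F1 that by blast
  have F2R: "x \<in> reg w" if "x \<in> F2" for x using F2 that by blast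
  have I: "val E gam C' X' y \<longleftrightarrow> val E gam Cw Xw y" if "y \<in> V" "(w, y) \<in> E\<^sup>*" for y
  proof (rule val_agree[where N = "{x\<in>V. (w, x) \<in> E\<^sup>*}" and K = "{}"])
    show "y \<in> {x\<in>V. (w, x) \<in> E\<^sup>*}" using that by simp
  next
    fix x assume "x \<in> {x\<in>V. (w, x) \<in> E\<^sup>*}"
    then have x: "x \<in> V" "(w, x) \<in> E\<^sup>*" by auto
    show "(x \<in> C' \<or> gam x = BE) = (x \<in> Cw \<or> gam x = BE)" using Cw_iff[OF x] C'_iff[OF x] by blast
  next
    fix x assume "x \<in> {x\<in>V. (w, x) \<in> E\<^sup>*}"
    then have x: "x \<in> V" "(w, x) \<in> E\<^sup>*" by auto
    have "x \<notin> F1" using F1D disj x by blast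
    then show "(x \<in> X') = (x \<in> Xw)" using Cw_iff[OF x] C'_iff[OF x] unfolding X'_def Xw_def by blast
  next
    fix x c assume "x \<in> {x\<in>V. (w, x) \<in> E\<^sup>*}" "(x, c) \<in> E"
    then show "c \<in> {x\<in>V. (w, x) \<in> E\<^sup>*}" using edge_V by auto
  qed auto
  have bwI: "val E gam C' X' w \<longleftrightarrow> bw" using I[of w] wl by (simp add: bw_def)
  have wC: "w \<in> C" using inC[of w] wl by simp
  have wF1: "w \<notin> F1" using F1D disj by blast
  have vreg: "v \<notin> reg w"
  proof
    assume "v \<in> reg w"
    then have "(w, v) \<in> E\<^sup>*" by (rule reg_rtr)
    then show False using wl antisym_E by blast
  qed
  have II: "val E gam C' X' v \<longleftrightarrow> val E gam C Xb v"
  proof (rule val_agree[where N = "{x\<in>V. (v, x) \<in> E\<^sup>*} - (reg w - {w})" and K = "{w}"])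
    show "v \<in> {x\<in>V. (v, x) \<in> E\<^sup>*} - (reg w - {w})" using vV vreg by simp
  next
    fix x assume "x \<in> {x\<in>V. (v, x) \<in> E\<^sup>*} - (reg w - {w})" "x \<notin> {w}"
    then have "x \<notin> reg w" by auto
    then show "(x \<in> C' \<or> gam x = BE) = (x \<in> C \<or> gam x = BE)" unfolding C'_def by blast
  next
    fix x assume "x \<in> {x\<in>V. (v, x) \<in> E\<^sup>*} - (reg w - {w})" "x \<notin> {w}"
    then have "x \<notin> reg w" "x \<noteq> w" by auto
    then show "(x \<in> X') = (x \<in> Xb)" using F2R unfolding X'_def Xb_def S'_def C'_def by auto
  next
    fix x c assume x: "x \<in> {x\<in>V. (v, x) \<in> E\<^sup>*} - (reg w - {w})" "x \<notin> {w}" "x \<notin> C'"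
      and xc: "(x, c) \<in> E"
    then have xr: "x \<notin> reg w" "x \<noteq> w" "x \<in> V" "(v, x) \<in> E\<^sup>*" by auto
    then have xC: "x \<notin> C" using x(3) unfolding C'_def by blast
    have cV: "c \<in> V" using xc edge_V by blast
    have vc: "(v, c) \<in> E\<^sup>*" using xr(4) xc by simp
    have "c \<notin> reg w - {w}"
    proof
      assume "c \<in> reg w - {w}"
      then have "dominates E R w c" unfolding reg_def by auto
      then have wx: "(w, x) \<in> E\<^sup>*" using dom_D6 xc by blast
      show False
      proof (cases "x = v")
        case True then show False using wx wl antisym_E by blast
      next
        case False
        then have "less E x v" using xr unfolding less_def leq_def by simp
        then have "x \<in> DW W" using xC xr unfolding C_def CW_def by blast
        then show False using disj wx by blast
      qed
    qed
    then show "c \<in> {x\<in>V. (v, x) \<in> E\<^sup>*} - (reg w - {w})" using cV vc by blast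
  next
    fix x assume "x \<in> {x\<in>V. (v, x) \<in> E\<^sup>*} - (reg w - {w})" "x \<in> {w}"
    then have xw: "x = w" by simp
    have "val E gam C Xb w \<longleftrightarrow> w \<in> Xb" using wC val_unfold[of E gam C Xb w] by simp
    also have "\<dots> \<longleftrightarrow> bw" using wC wF1 unfolding Xb_def S'_def by auto
    finally show "val E gam C' X' x \<longleftrightarrow> val E gam C Xb x" using bwI xw by simp
  qed
  then show ?thesis unfolding C'_def C_def X'_def Xb_def S'_def bw_def Cw_def Xw_def .
qed

lemma InvW_step:
  assumes vV: "v \<in> V" and vB: "gam v \<noteq> BE"
    and Wsub: "W \<subseteq> {x\<in>V. is_idom E R v x}"
    and iw: "is_idom E R v w" and wW: "w \<notin> W" and ord: "\<forall>wi\<in>W. \<not> less E wi w"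
    and IW: "InvW v W a" and Iw: "Inv w b"
  shows "InvW v (insert w W) (sfp_subst a w b)"
proof -
  have DWi: "DW (insert w W) = DW W \<union> reg w" by (auto simp: DW_def)
  have dj: "DW W \<inter> reg w = {}"
    using step_disj[OF Wsub iw wW ord] reg_rtr by blast
  have CWi: "CW v (insert w W) = CW v W - reg w" by (auto simp: CW_def DWi)
  let ?C = "CW v W"
  let ?C' = "CW v W - reg w"
  show ?thesis unfolding InvW_def
  proof (intro conjI allI impI)
    show "fin_supp (sfp_subst a w b)" using IW by (simp add: InvW_def fin_supp_subst)
  next
    fix S :: "'v set" assume fS: "finite S"
    let ?bw = "\<lambda>F2. val E gam (Cv w) ((S \<inter> Cv w) \<union> F2) w"
    let ?c1 = "\<lambda>F1. ind (val E gam ?C ((insert w S \<inter> ?C) \<union> F1) v)"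
    let ?c0 = "\<lambda>F1. ind (val E gam ?C (((S - {w}) \<inter> ?C) \<union> F1) v)"
    have q: "ev b S = Ex (reg w) (\<lambda>F2. ind (?bw F2))" using Iw fS unfolding Inv_def by blast
    have a1: "ev a (insert w S) = Ex (DW W) ?c1" using IW fS unfolding InvW_def by blast
    have a0: "ev a (S - {w}) = Ex (DW W) ?c0" using IW fS unfolding InvW_def by blast
    have "Ex (DW (insert w W)) (\<lambda>F. ind (val E gam (CW v (insert w W)) ((S \<inter> CW v (insert w W)) \<union> F) v))
        = Ex (DW W) (\<lambda>F1. Ex (reg w) (\<lambda>F2. ind (val E gam ?C' ((S \<inter> ?C') \<union> (F1 \<union> F2)) v)))"
      unfolding DWi CWi by (rule Ex_union[OF dj])
    also have "\<dots> = Ex (DW W) (\<lambda>F1. Ex (reg w) (\<lambda>F2. if ?bw F2 then ?c1 F1 else ?c0 F1))"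
    proof (rule Ex_cong, rule Ex_cong)
      fix F1 F2 assume "F1 \<subseteq> DW W \<inter> B0" "F2 \<subseteq> reg w \<inter> B0"
      then show "ind (val E gam ?C' ((S \<inter> ?C') \<union> (F1 \<union> F2)) v) = (if ?bw F2 then ?c1 F1 else ?c0 F1)"
        using comp_lemma[OF vV vB Wsub iw wW ord, of F1 F2 S] by simp
    qed
    also have "\<dots> = Ex (DW W) (\<lambda>F1. ?c0 F1 + ev b S * (?c1 F1 - ?c0 F1))"
      unfolding q by (subst Ex_if) (simp add: algebra_simps)
    also have "\<dots> = ev b S * (ev a (insert w S) - ev a (S - {w})) + ev a (S - {w})"
      unfolding Ex_lin a1 a0 by simp
    finally show "ev (sfp_subst a w b) S =
      Ex (DW (insert w W)) (\<lambda>F. ind (val E gam (CW v (insert w W)) ((S \<inter> CW v (insert w W)) \<union> F) v))"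
      using ev_subst[OF fS] by simp
  qed
qed

end



context FT
begin

lemma InvW_final:
  assumes vV: "v \<in> V" and vB: "gam v \<noteq> BE" and IW: "InvW v {w\<in>V. is_idom E R v w} a"
  shows "Inv v a"
proof -
  let ?W = "{w\<in>V. is_idom E R v w}"
  have D: "DW ?W = {u. dominates E R v u}" by (rule DW_all[OF vV])
  have C: "CW v ?W = Cv v"
    unfolding CW_def Cv_def D reg_def less_def by auto
  have vB0: "v \<notin> B0" using vB by (simp add: B0_def BEs_def)
  have RB: "DW ?W \<inter> B0 = reg v \<inter> B0"
    unfolding D reg_def using vB0 dom_basic by auto
  have Ex_eq: "Ex (DW ?W) = Ex (reg v)" unfolding Ex_def RB ..
  show ?thesis using IW unfolding InvW_def Inv_def C Ex_eq .
qed

lemma inner: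
  assumes vV: "v \<in> V" and vB: "gam v \<noteq> BE" and inok: "sfpa_inner_ok V E R ws"
    and gI: "\<forall>w\<in>set (ws v). Inv w (g w)"
  shows "Inv v (foldl (\<lambda>a w. sfp_subst a w (g w)) (sfpa_init E gam v) (ws v))"
proof -
  define L where "L = ws v"
  have dL: "distinct L" and sL: "set L = {w\<in>V. is_idom E R v w}"
    and oL: "\<forall>j < length L. \<forall>u \<in> set (drop j L). \<not> less E (L ! j) u"
    using inok vV unfolding sfpa_inner_ok_def L_def by auto
  let ?f = "\<lambda>a w. sfp_subst a w (g w)"
  have "k \<le> length L \<Longrightarrow> InvW v (set (take k L)) (foldl ?f (sfpa_init E gam v) (take k L))" for k
  proof (induction k)
    case 0 then show ?case using InvW_init[OF vV vB] by simp
  next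
    case (Suc k)
    then have kL: "k < length L" by simp
    have tk: "take (Suc k) L = take k L @ [L ! k]" using kL by (simp add: take_Suc_conv_app_nth)
    have IH: "InvW v (set (take k L)) (foldl ?f (sfpa_init E gam v) (take k L))" using Suc by simp
    have mem: "L ! k \<in> set L" using kL by simp
    have Wsub: "set (take k L) \<subseteq> {x\<in>V. is_idom E R v x}"
      using set_take_subset[of k L] unfolding sL .
    have iw: "is_idom E R v (L ! k)" using mem unfolding sL by simp
    have indrop: "L ! k \<in> set (drop k L)" by (simp add: Cons_nth_drop_Suc[OF kL, symmetric])
    have wW: "L ! k \<notin> set (take k L)"
      using set_take_disj_set_drop_if_distinct[OF dL, of k k] indrop by blast
    have ord: "\<forall>wi\<in>set (take k L). \<not> less E wi (L ! k)"
    proof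
      fix wi assume "wi \<in> set (take k L)"
      then obtain i where i: "i < k" "wi = L ! i" using kL by (auto simp: in_set_conv_nth)
      have "L ! k = drop i L ! (k - i)" using i kL by simp
      moreover have "k - i < length (drop i L)" using i kL by simp
      ultimately have "L ! k \<in> set (drop i L)" by (metis nth_mem)
      then show "\<not> less E wi (L ! k)" using oL[rule_format, of i "L ! k"] i kL by simp
    qed
    have gk: "Inv (L ! k) (g (L ! k))" using gI mem L_def by blast
    have "InvW v (insert (L ! k) (set (take k L))) (?f (foldl ?f (sfpa_init E gam v) (take k L)) (L ! k))"
      by (rule InvW_step[OF vV vB Wsub iw wW ord IH gk])
    then show ?case unfolding tk by simp
  qed
  from this[of "length L"] have "InvW v (set L) (foldl ?f (sfpa_init E gam v) L)" by simp
  then show ?thesis unfolding L_def[symmetric] using InvW_final[OF vV vB] sL by simp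
qed

lemma outer:
  assumes ook: "sfpa_outer_ok V E vs" and inok: "sfpa_inner_ok V E R ws"
  shows "k \<le> length vs \<Longrightarrow> \<forall>u\<in>set (take k vs).
    Inv u (foldl (\<lambda>g v. g(v := sfpa_step E gam p ws g v)) (\<lambda>_. sfp_const 0) (take k vs) u)"
proof (induction k)
  case 0 then show ?case by simp
next
  case (Suc k)
  have dv: "distinct vs" and sv: "set vs = V"
    and ov: "\<forall>i < length vs. \<forall>u \<in> set (drop i vs). \<not> less E u (vs ! i)"
    using ook unfolding sfpa_outer_ok_def by auto
  let ?st = "\<lambda>g v. g(v := sfpa_step E gam p ws g v)"
  define G where "G = foldl ?st (\<lambda>_. sfp_const 0) (take k vs)"
  have kL: "k < length vs" using Suc by simp
  have IH: "\<forall>u\<in>set (take k vs). Inv u (G u)" unfolding G_def by (rule Suc.IH) (use kL in simp)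
  define v where "v = vs ! k"
  have tk: "take (Suc k) vs = take k vs @ [v]" using kL by (simp add: take_Suc_conv_app_nth v_def)
  have vV: "v \<in> V" using kL sv v_def by auto
  have Iv: "Inv v (sfpa_step E gam p ws G v)"
  proof (cases "gam v = BE")
    case True then show ?thesis using Inv_BE[OF vV True] by (simp add: sfpa_step_def)
  next
    case False
    have "\<forall>w\<in>set (ws v). Inv w (G w)"
    proof
      fix w assume w: "w \<in> set (ws v)"
      then have iw: "is_idom E R v w" "w \<in> V" using inok vV unfolding sfpa_inner_ok_def by auto
      have lw: "less E w v" using idom_dom[OF iw(1)] unfolding dominates_def by blast
      have "w \<in> set (take k vs)"
      proof (rule ccontr)
        assume "w \<notin> set (take k vs)"
        then have "w \<in> set (drop k vs)" using iw(2) sv by (metis Un_iff append_take_drop_id set_append)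
        then show False using ov kL lw v_def by blast
      qed
      then show "Inv w (G w)" using IH by blast
    qed
    then show ?thesis using inner[OF vV False inok] False by (simp add: sfpa_step_def)
  qed
  show ?case
  proof
    fix u assume "u \<in> set (take (Suc k) vs)"
    then have u: "u \<in> set (take k vs) \<or> u = v" unfolding tk by auto
    have Gs: "foldl ?st (\<lambda>_. sfp_const 0) (take (Suc k) vs) = G(v := sfpa_step E gam p ws G v)"
      unfolding tk G_def by simp
    show "Inv u (foldl ?st (\<lambda>_. sfp_const 0) (take (Suc k) vs) u)"
      unfolding Gs using IH Iv u by (cases "u = v") auto
  qed
qed

lemma unrel: "unreliability V E R gam p = Ex V (\<lambda>F. ind (val E gam {} F R))"
proof -
  let ?M = "Pi_pmf B0 False (\<lambda>v. bernoulli_pmf (p v))"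
  let ?A = "{f. sfun E gam f R}"
  let ?Fs = "(\<lambda>F u. u \<in> F) ` Pow B0"
  have sp: "set_pmf ?M \<subseteq> ?Fs"
  proof
    fix f assume "f \<in> set_pmf ?M"
    then have "\<forall>x. x \<notin> B0 \<longrightarrow> f x = False" using set_Pi_pmf_subset[OF finB0, of False "\<lambda>v. bernoulli_pmf (p v)"] by blast
    then have "f = (\<lambda>u. u \<in> {x\<in>B0. f x})" by auto
    then show "f \<in> ?Fs" by (rule image_eqI) auto
  qed
  have finFs: "finite ?Fs" using finB0 by simp
  have "measure_pmf.prob ?M ?A = measure_pmf.prob ?M (?A \<inter> set_pmf ?M)"
    by (simp add: measure_Int_set_pmf)
  also have "?A \<inter> set_pmf ?M = (?Fs \<inter> ?A) \<inter> set_pmf ?M" using sp by blast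
  also have "measure_pmf.prob ?M \<dots> = measure_pmf.prob ?M (?Fs \<inter> ?A)"
    by (simp add: measure_Int_set_pmf)
  also have "\<dots> = sum (pmf ?M) (?Fs \<inter> ?A)"
    by (rule measure_measure_pmf_finite) (use finFs in simp)
  also have "\<dots> = (\<Sum>f\<in>?Fs. if f \<in> ?A then pmf ?M f else 0)"
    by (rule sum.inter_restrict[OF finFs])
  also have "\<dots> = (\<Sum>F\<in>Pow B0. if sfun E gam (\<lambda>u. u \<in> F) R then pmf ?M (\<lambda>u. u \<in> F) else 0)"
  proof (subst sum.reindex)
    show "inj_on (\<lambda>F u. u \<in> F) (Pow B0)"
      by (rule inj_onI) (metis Collect_mem_eq)
  qed simp
  also have "\<dots> = Ex V (\<lambda>F. ind (val E gam {} F R))"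
    unfolding Ex_def
  proof -
    have VB: "V \<inter> B0 = B0" using B0V by blast
    show "(\<Sum>F\<in>Pow B0. if sfun E gam (\<lambda>u. u \<in> F) R then pmf ?M (\<lambda>u. u \<in> F) else 0) =
      (\<Sum>F\<in>Pow (V \<inter> B0). wt p (V \<inter> B0) F * ind (val E gam {} F R))"
      unfolding VB
    proof (rule sum.cong[OF refl])
      fix F assume F: "F \<in> Pow B0"
      have "pmf ?M (\<lambda>u. u \<in> F) = (\<Prod>x\<in>B0. pmf (bernoulli_pmf (p x)) (x \<in> F))"
        by (rule pmf_Pi') (use finB0 F in auto)
      also have "\<dots> = wt p B0 F"
        unfolding wt_def
      proof (rule prod.cong[OF refl])
        fix x assume "x \<in> B0"
        then have "0 \<le> p x" "p x \<le> 1" using prob01 by (auto simp: B0_def BEs_def)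
        then show "pmf (bernoulli_pmf (p x)) (x \<in> F) = (if x \<in> F then p x else 1 - p x)" by simp
      qed
      finally show "(if sfun E gam (\<lambda>u. u \<in> F) R then pmf ?M (\<lambda>u. u \<in> F) else 0) =
         wt p B0 F * ind (val E gam {} F R)"
        by (simp add: sfun_val ind_def)
    qed
  qed
  finally show ?thesis unfolding unreliability_def B0_def .
qed

end

theorem theorem21:
  fixes V :: "'v set" and E :: "('v \<times> 'v) set" and R :: 'v
    and gam :: "'v \<Rightarrow> gate" and p :: "'v \<Rightarrow> real"
    and vs :: "'v list" and ws :: "'v \<Rightarrow> 'v list"
  assumes "fault_tree V E R gam p"
    and "sfpa_outer_ok V E vs"
    and "sfpa_inner_ok V E R ws"
  shows "sfpa_run E gam p ws vs R = sfp_const (unreliability V E R gam p)"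
proof -
  interpret FT V E R gam p by unfold_locales (rule assms(1))
  have sv: "set vs = V" using assms(2) unfolding sfpa_outer_ok_def by auto
  have "\<forall>u\<in>set vs. Inv u (sfpa_run E gam p ws vs u)"
    using outer[OF assms(2,3), of "length vs"] unfolding sfpa_run_def by simp
  then have I: "Inv R (sfpa_run E gam p ws vs R)" using RV sv by blast
  show ?thesis
  proof (rule sfp_ext)
    fix Y :: "'v set" assume "infinite Y"
    then show "sfpa_run E gam p ws vs R Y = sfp_const (unreliability V E R gam p) Y"
      using I unfolding Inv_def fin_supp_def sfp_const_def by auto
  next
    fix S :: "'v set" assume fS: "finite S"
    have "ev (sfpa_run E gam p ws vs R) S = Ex V (\<lambda>F. ind (val E gam {} F R))"
      using I fS unfolding Inv_def reg_R Cv_R by simp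
    then show "ev (sfpa_run E gam p ws vs R) S = ev (sfp_const (unreliability V E R gam p)) S"
      using fS by (simp add: ev_const unrel)
  qed
qed


end
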